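(* Let $K\ge2$ be a constant integer, $m=m(n)$ positive integers and $p=p(n)=o(1/n)$. Then $$d_{TV}\!\left(\bigcup_{k=2}^{K}\mathcal H_k(n,m,p),\ \bigcup_{k=2}^{K}H^{(k)}\!\left(n,1-\exp(-mp^k(1-p)^{n-k})\right)\right)=o(1),$$ where the hypergraphs $H^{(k)}(n,1-\exp(-mp^k(1-p)^{n-k}))$, $k=2,\dots,K$, are independent.
   Context: In the random intersection model with vertex set $\mathcal V$ ($|\mathcal V|=n$) and object set $\mathcal W$ ($|\mathcal W|=m$), each vertex $v$ gets $W(v)\subseteq\mathcal W$ where the events $w\in W(v)$ are independent with probability $p$; put $V(w)=\{v\in\mathcal V: w\in W(v)\}$. $\mathcal H_k(n,m,p)$ is the hypergraph on $\mathcal V$ whose edge set is $\{V(w): w\in\mathcal W,\ |V(w)|=k\}$ (as a set of $k$-subsets). $H^{(k)}(n,r)$ denotes the random $k$-uniform hypergraph on $\mathcal V$ in which each $k$-subset is an edge independently with probability $r$. Unions of hypergraphs on the same vertex set are taken edge-wise. $d_{TV}(X,Y)=\max_A|\Pr\{X\in A\}-\Pr\{Y\in A\}|$ is the total variation distance. *)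

theory Defs
  imports "HOL-Probability.Probability" "HOL-Library.Landau_Symbols"
begin

definition dTV :: "'a pmf \<Rightarrow> 'a pmf \<Rightarrow> real" where
  "dTV P Q = (SUP A. \<bar>measure_pmf.prob P A - measure_pmf.prob Q A\<bar>)"

text \<open>Random intersection model: vertices {..<n}, objects {..<m}; the pair (v,w)
  means w \<in> W(v), each independently with probability p.\<close>
definition rim :: "nat \<Rightarrow> nat \<Rightarrow> real \<Rightarrow> (nat \<times> nat \<Rightarrow> bool) pmf" where
  "rim n m p = Pi_pmf ({..<n} \<times> {..<m}) False (\<lambda>_. bernoulli_pmf p)"

definition Vobj :: "nat \<Rightarrow> (nat \<times> nat \<Rightarrow> bool) \<Rightarrow> nat \<Rightarrow> nat set" where
  "Vobj n f w = {v \<in> {..<n}. f (v, w)}"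

definition Hk_edges :: "nat \<Rightarrow> nat \<Rightarrow> nat \<Rightarrow> (nat \<times> nat \<Rightarrow> bool) \<Rightarrow> nat set set" where
  "Hk_edges k n m f = {Vobj n f w | w. w < m \<and> card (Vobj n f w) = k}"

definition union_rim :: "nat \<Rightarrow> nat \<Rightarrow> nat \<Rightarrow> real \<Rightarrow> nat set set pmf" where
  "union_rim K n m p = map_pmf (\<lambda>f. \<Union>k\<in>{2..K}. Hk_edges k n m f) (rim n m p)"

definition binom_hyp :: "nat \<Rightarrow> nat \<Rightarrow> real \<Rightarrow> nat set set pmf" where
  "binom_hyp k n r = map_pmf (\<lambda>g. {S. S \<subseteq> {..<n} \<and> card S = k \<and> g S})
     (Pi_pmf {S. S \<subseteq> {..<n} \<and> card S = k} False (\<lambda>_. bernoulli_pmf r))"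

definition union_binom :: "nat \<Rightarrow> nat \<Rightarrow> (nat \<Rightarrow> real) \<Rightarrow> nat set set pmf" where
  "union_binom K n r = map_pmf (\<lambda>H. \<Union>k\<in>{2..K}. H k)
     (Pi_pmf {2..K} {} (\<lambda>k. binom_hyp k n (r k)))"

end

theory Submission
  imports Defs
begin


lemma poi_f_sums: "(\<lambda>j. (l::real)^j / fact j) sums exp l"
  using exp_converges[of l] by (simp add: divide_inverse mult.commute scaleR_conv_of_real)

lemma poi_g_sums: "(\<lambda>j. real j * ((l::real)^j / fact j)) sums (l * exp l)"
proof -
  have "(\<lambda>i. real (Suc i) * (l^(Suc i) / fact (Suc i))) = (\<lambda>i. l * (l^i / fact i))"
  proof
    fix i
    have "fact (Suc i) = (real (Suc i)) * (fact i :: real)" by simp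
    then show "real (Suc i) * (l^(Suc i) / fact (Suc i)) = l * (l^i / fact i)"
      by (simp del: of_nat_Suc fact_Suc)
  qed
  moreover have "(\<lambda>i. l * (l^i / fact i)) sums (l * exp l)"
    using sums_mult[OF poi_f_sums] .
  ultimately have "(\<lambda>i. real (Suc i) * (l^(Suc i) / fact (Suc i))) sums (l * exp l)" by simp
  then show ?thesis by (subst (asm) sums_Suc_iff) simp
qed

lemma poi_h_sums: "(\<lambda>j. real j * (real j - 1) * ((l::real)^j / fact j)) sums (l^2 * exp l)"
proof -
  have "(\<lambda>i. real (Suc (Suc i)) * (real (Suc (Suc i)) - 1) * (l^(Suc (Suc i)) / fact (Suc (Suc i)))) = (\<lambda>i. l^2 * (l^i / fact i))"
  proof
    fix i
    have "real (Suc (Suc i)) - 1 = real (Suc i)" by simp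
    then show "real (Suc (Suc i)) * (real (Suc (Suc i)) - 1) * (l^(Suc (Suc i)) / fact (Suc (Suc i))) = l^2 * (l^i / fact i)"
      by (simp del: of_nat_Suc add: power2_eq_square field_simps) (simp add: algebra_simps)
  qed
  moreover have "(\<lambda>i. l^2 * (l^i / fact i)) sums (l^2 * exp l)"
    using sums_mult[OF poi_f_sums] .
  ultimately have "(\<lambda>i. real (Suc (Suc i)) * (real (Suc (Suc i)) - 1) * (l^(Suc (Suc i)) / fact (Suc (Suc i)))) sums (l^2 * exp l)" by simp
  then have "(\<lambda>i. real (Suc i) * (real (Suc i) - 1) * (l^(Suc i) / fact (Suc i))) sums (l^2 * exp l)"
    by (subst (asm) sums_Suc_iff) simp
  then show ?thesis by (subst (asm) sums_Suc_iff) simp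
qed

lemma poi_second:
  assumes "0 < l"
  shows "(\<lambda>j. pmf (poisson_pmf l) j * (real j - l)^2) sums l"
proof -
  have e: "(\<lambda>j. exp (-l) * (real j * (real j - 1) * (l^j / fact j) + (1 - 2*l) * (real j * (l^j / fact j)) + l^2 * (l^j / fact j)))
     sums (exp (-l) * (l^2 * exp l + (1 - 2*l) * (l * exp l) + l^2 * exp l))"
    by (intro sums_mult sums_add poi_h_sums poi_g_sums poi_f_sums)
  have "exp (-l) * (l^2 * exp l + (1 - 2*l) * (l * exp l) + l^2 * exp l) = l"
    by (simp add: algebra_simps power2_eq_square exp_minus field_simps)
  moreover have "(\<lambda>j. exp (-l) * (real j * (real j - 1) * (l^j / fact j) + (1 - 2*l) * (real j * (l^j / fact j)) + l^2 * (l^j / fact j)))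
      = (\<lambda>j. pmf (poisson_pmf l) j * (real j - l)^2)"
    using assms by (intro ext) (simp add: algebra_simps power2_eq_square diff_divide_distrib add_divide_distrib)
  ultimately show ?thesis using e by simp
qed




lemma binsum_one: "(\<Sum>j\<le>m. real (m choose j) * q^j * (1-q)^(m-j)) = 1"
  using binomial_ring[of q "1-q" m] by (simp add: atLeast0AtMost mult.commute mult.left_commute)

lemma binsum_shift:
  fixes q :: real
  shows "(\<Sum>j\<le>Suc m. real (Suc m choose j) * q^j * (1-q)^(Suc m - j) * (real j * g j))
       = real (Suc m) * q * (\<Sum>j\<le>m. real (m choose j) * q^j * (1-q)^(m-j) * g (Suc j))"
proof -
  have "(\<Sum>j\<le>Suc m. real (Suc m choose j) * q^j * (1-q)^(Suc m - j) * (real j * g j))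
      = (\<Sum>j\<le>m. real (Suc m choose Suc j) * q^Suc j * (1-q)^(Suc m - Suc j) * (real (Suc j) * g (Suc j)))"
    by (subst sum.atMost_Suc_shift) simp
  also have "\<dots> = (\<Sum>j\<le>m. real (Suc m) * q * (real (m choose j) * q^j * (1-q)^(m-j) * g (Suc j)))"
  proof (rule sum.cong[OF refl])
    fix j assume "j \<in> {..m}"
    have "real (Suc j) * real (Suc m choose Suc j) = real (Suc m) * real (m choose j)"
      using Suc_times_binomial[of j m] by (metis of_nat_mult)
    then show "real (Suc m choose Suc j) * q^Suc j * (1-q)^(Suc m - Suc j) * (real (Suc j) * g (Suc j))
       = real (Suc m) * q * (real (m choose j) * q^j * (1-q)^(m-j) * g (Suc j))"
    proof -
      have "real (Suc m choose Suc j) * q^Suc j * (1-q)^(Suc m - Suc j) * (real (Suc j) * g (Suc j))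
        = (real (Suc j) * real (Suc m choose Suc j)) * q * (q^j * (1-q)^(m-j) * g (Suc j))"
        by (simp only: power_Suc diff_Suc_Suc) (simp only: ac_simps)
      also have "\<dots> = real (Suc m) * q * (real (m choose j) * q^j * (1-q)^(m-j) * g (Suc j))"
        by (simp only: \<open>real (Suc j) * real (Suc m choose Suc j) = real (Suc m) * real (m choose j)\<close> ac_simps)
      finally show ?thesis .
    qed
  qed
  finally show ?thesis by (simp add: sum_distrib_left)
qed

lemma bin_E1: "(\<Sum>j\<le>m. real (m choose j) * q^j * (1-q)^(m-j) * real j) = real m * q"
proof (cases m)
  case 0 then show ?thesis by simp
next
  case (Suc m')
  have "(\<Sum>j\<le>Suc m'. real (Suc m' choose j) * q^j * (1-q)^(Suc m' - j) * (real j * 1))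
     = real (Suc m') * q * (\<Sum>j\<le>m'. real (m' choose j) * q^j * (1-q)^(m'-j) * 1)"
    by (rule binsum_shift)
  then show ?thesis using Suc binsum_one[of m' q] by simp
qed

lemma bin_E2: "(\<Sum>j\<le>m. real (m choose j) * q^j * (1-q)^(m-j) * (real j * (real j - 1))) = real m * (real m - 1) * q^2"
proof (cases m)
  case 0 then show ?thesis by simp
next
  case (Suc m')
  have "(\<Sum>j\<le>Suc m'. real (Suc m' choose j) * q^j * (1-q)^(Suc m' - j) * (real j * (real j - 1)))
     = real (Suc m') * q * (\<Sum>j\<le>m'. real (m' choose j) * q^j * (1-q)^(m'-j) * (real (Suc j) - 1))"
    by (rule binsum_shift)
  also have "(\<Sum>j\<le>m'. real (m' choose j) * q^j * (1-q)^(m'-j) * (real (Suc j) - 1)) = real m' * q"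
    using bin_E1[of m' q] by simp
  finally show ?thesis using Suc by (simp add: power2_eq_square algebra_simps)
qed

lemma bin_second:
  assumes "0 \<le> q" "q \<le> 1"
  shows "(\<Sum>j\<le>m. pmf (binomial_pmf m q) j * (real j - real m * q)^2) = real m * q * (1 - q)"
proof -
  have "(\<Sum>j\<le>m. pmf (binomial_pmf m q) j * (real j - real m * q)^2)
     = (\<Sum>j\<le>m. real (m choose j) * q^j * (1-q)^(m-j) * (real j * (real j - 1)))
       + (1 - 2 * real m * q) * (\<Sum>j\<le>m. real (m choose j) * q^j * (1-q)^(m-j) * real j)
       + (real m * q)^2 * (\<Sum>j\<le>m. real (m choose j) * q^j * (1-q)^(m-j))"
    using assms by (simp add: sum_distrib_left sum.distrib[symmetric] power2_eq_square algebra_simps)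
  also have "\<dots> = real m * q * (1 - q)"
    unfolding bin_E1 bin_E2 binsum_one by (simp add: power2_eq_square algebra_simps)
  finally show ?thesis .
qed




lemma pmf_tail_markov_nat:
  fixes N :: "nat pmf" and h :: "nat \<Rightarrow> real"
  assumes h: "\<And>j. 0 \<le> h j" and B: "\<And>j. j \<in> B \<Longrightarrow> 1 \<le> h j"
    and s: "(\<lambda>j. pmf N j * h j) sums v"
  shows "measure_pmf.prob N B \<le> v"
proof -
  have "emeasure (measure_pmf N) B = (\<integral>\<^sup>+ j. indicator B j \<partial>measure_pmf N)"
    by simp
  also have "\<dots> \<le> (\<integral>\<^sup>+ j. ennreal (h j) \<partial>measure_pmf N)"
    by (intro nn_integral_mono) (auto simp: indicator_def B h)
  also have "\<dots> = (\<integral>\<^sup>+ j. ennreal (pmf N j * h j) \<partial>count_space UNIV)"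
    by (simp add: nn_integral_measure_pmf ennreal_mult h)
  also have "\<dots> = (\<Sum>j. ennreal (pmf N j * h j))"
    by (simp add: nn_integral_count_space_nat)
  also have "\<dots> = ennreal v"
    using s h by (subst suminf_ennreal2) (auto simp: sums_summable[OF s] sums_unique[OF s, symmetric])
  finally have "emeasure (measure_pmf N) B \<le> ennreal v" .
  moreover have "0 \<le> v" using s h sums_le[OF _ sums_zero s] by (metis pmf_nonneg zero_le_mult_iff)
  ultimately show ?thesis by (simp add: measure_pmf.emeasure_eq_measure)
qed

lemma poi_tail:
  assumes "0 < l" "0 < T"
  shows "measure_pmf.prob (poisson_pmf l) {j. T < \<bar>real j - l\<bar>} \<le> l / T^2"
proof (rule pmf_tail_markov_nat[where h = "\<lambda>j. (real j - l)^2 / T^2"])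
  fix j assume "j \<in> {j. T < \<bar>real j - l\<bar>}"
  then have "T^2 \<le> (real j - l)^2" using assms
    by (metis abs_le_square_iff abs_of_pos less_le mem_Collect_eq)
  then show "1 \<le> (real j - l)^2 / T^2" using assms by simp
next
  show "(\<lambda>j. pmf (poisson_pmf l) j * ((real j - l)^2 / T^2)) sums (l / T^2)"
    using sums_divide[OF poi_second[OF assms(1)], of "T^2"] by (simp add: times_divide_eq_right)
qed simp

lemma bin_tail:
  assumes "0 \<le> q" "q \<le> 1" "0 < T"
  shows "measure_pmf.prob (binomial_pmf m q) {j. T < \<bar>real j - real m * q\<bar>} \<le> real m * q * (1-q) / T^2"
proof (rule pmf_tail_markov_nat[where h = "\<lambda>j. (real j - real m * q)^2 / T^2"])
  fix j assume "j \<in> {j. T < \<bar>real j - real m * q\<bar>}"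
  then have "T^2 \<le> (real j - real m * q)^2" using assms
    by (metis abs_le_square_iff abs_of_pos less_le mem_Collect_eq)
  then show "1 \<le> (real j - real m * q)^2 / T^2" using assms by simp
next
  have "(\<lambda>j. pmf (binomial_pmf m q) j * ((real j - real m * q)^2 / T^2)) sums
        (\<Sum>j\<le>m. pmf (binomial_pmf m q) j * ((real j - real m * q)^2 / T^2))"
    using assms by (intro sums_finite) (auto simp: binomial_eq_0)
  also have "(\<Sum>j\<le>m. pmf (binomial_pmf m q) j * ((real j - real m * q)^2 / T^2)) = real m * q * (1-q) / T^2"
    using bin_second[OF assms(1,2), of m] by (simp add: sum_divide_distrib[symmetric] times_divide_eq_right)
  finally show "(\<lambda>j. pmf (binomial_pmf m q) j * ((real j - real m * q)^2 / T^2)) sums (real m * q * (1-q) / T^2)" .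
qed simp




lemma prob_bind_expect:
  "measure_pmf.prob (bind_pmf M f) A = measure_pmf.expectation M (\<lambda>x. measure_pmf.prob (f x) A)"
proof -
  have "emeasure (measure_pmf (bind_pmf M f)) A = (\<integral>\<^sup>+x. emeasure (measure_pmf (f x)) A \<partial>M)"
    by simp
  also have "\<dots> = (\<integral>\<^sup>+x. ennreal (measure_pmf.prob (f x) A) \<partial>M)"
    by (simp add: measure_pmf.emeasure_eq_measure)
  also have "\<dots> = ennreal (measure_pmf.expectation M (\<lambda>x. measure_pmf.prob (f x) A))"
    by (rule nn_integral_eq_integral)
       (auto intro!: measure_pmf.integrable_const_bound[where B=1])
  finally show ?thesis
    by (simp add: measure_pmf.emeasure_eq_measure)
qed

lemma tv_core_dir:
  fixes M N :: "nat pmf" and f :: "nat \<Rightarrow> 'b pmf"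
  assumes W: "finite W" and c: "0 \<le> c" "c \<le> 1" and MN: "\<And>j. j \<in> W \<Longrightarrow> c * pmf N j \<le> pmf M j"
  shows "measure_pmf.prob (bind_pmf N f) A - measure_pmf.prob (bind_pmf M f) A
           \<le> measure_pmf.prob N (-W) + (1 - c)"
proof -
  define h where "h j = measure_pmf.prob (f j) A" for j
  have h01: "0 \<le> h j" "h j \<le> 1" for j by (auto simp: h_def)
  have int: "integrable (measure_pmf P) g" if "\<And>j. \<bar>g j\<bar> \<le> 1" for P :: "nat pmf" and g :: "nat \<Rightarrow> real"
    by (intro measure_pmf.integrable_const_bound[where B=1]) (auto simp: that)
  have splitE: "measure_pmf.expectation P h =
       (\<Sum>j\<in>W. pmf P j * h j) + measure_pmf.expectation P (\<lambda>j. indicator (-W) j * h j)" for P :: "nat pmf"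
  proof -
    have "measure_pmf.expectation P h = measure_pmf.expectation P (\<lambda>j. indicator W j * h j + indicator (-W) j * h j)"
      by (intro Bochner_Integration.integral_cong) (auto simp: indicator_def)
    also have "\<dots> = measure_pmf.expectation P (\<lambda>j. indicator W j * h j) + measure_pmf.expectation P (\<lambda>j. indicator (-W) j * h j)"
      by (intro Bochner_Integration.integral_add int) (use h01 in \<open>auto simp: indicator_def\<close>)
    also have "measure_pmf.expectation P (\<lambda>j. indicator W j * h j) = (\<Sum>j\<in>W. pmf P j * h j)"
      by (subst integral_measure_pmf[OF W]) (auto simp: indicator_def)
    finally show ?thesis .
  qed
  have EN: "measure_pmf.expectation N (\<lambda>j. indicator (-W) j * h j) \<le> measure_pmf.prob N (-W)"
  proof -
    have "measure_pmf.expectation N (\<lambda>j. indicator (-W) j * h j) \<le> measure_pmf.expectation N (indicator (-W))"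
      by (intro integral_mono int) (use h01 in \<open>auto simp: indicator_def\<close>)
    then show ?thesis by simp
  qed
  have EM: "0 \<le> measure_pmf.expectation M (\<lambda>j. indicator (-W) j * h j)"
    by (intro Bochner_Integration.integral_nonneg) (use h01 in \<open>auto simp: indicator_def\<close>)
  have S1: "c * (\<Sum>j\<in>W. pmf N j * h j) \<le> (\<Sum>j\<in>W. pmf M j * h j)"
    unfolding sum_distrib_left
    by (intro sum_mono) (use MN h01 in \<open>auto simp: mult.assoc[symmetric] intro: mult_right_mono\<close>)
  have S2: "(\<Sum>j\<in>W. pmf N j * h j) \<le> 1"
  proof -
    have "(\<Sum>j\<in>W. pmf N j * h j) \<le> (\<Sum>j\<in>W. pmf N j)"
      by (intro sum_mono) (use h01 in \<open>auto intro: mult_left_le\<close>)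
    also have "\<dots> = measure_pmf.prob N W" by (simp add: measure_measure_pmf_finite[OF W])
    finally show ?thesis by (meson measure_pmf.prob_le_1 order.trans)
  qed
  have S3: "0 \<le> (\<Sum>j\<in>W. pmf N j * h j)" by (intro sum_nonneg) (use h01 in auto)
  have "measure_pmf.prob (bind_pmf N f) A - measure_pmf.prob (bind_pmf M f) A
      = measure_pmf.expectation N h - measure_pmf.expectation M h"
    by (simp add: prob_bind_expect h_def[abs_def])
  also have "\<dots> \<le> (1 - c) * (\<Sum>j\<in>W. pmf N j * h j) + measure_pmf.prob N (-W)"
    using splitE[of N] splitE[of M] EN EM S1 by (simp add: algebra_simps)
  also have "\<dots> \<le> (1 - c) + measure_pmf.prob N (-W)"
    using S2 S3 c by (simp add: mult_left_le)
  finally show ?thesis by simp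
qed

lemma dTV_bind_le:
  fixes M N :: "nat pmf" and f :: "nat \<Rightarrow> 'b pmf"
  assumes W: "finite W" and c: "0 \<le> c" "c \<le> 1" and MN: "\<And>j. j \<in> W \<Longrightarrow> c * pmf N j \<le> pmf M j"
  shows "dTV (bind_pmf M f) (bind_pmf N f) \<le> measure_pmf.prob N (-W) + (1 - c)"
  unfolding dTV_def
proof (rule cSUP_least)
  fix A
  have 1: "measure_pmf.prob (bind_pmf N f) A - measure_pmf.prob (bind_pmf M f) A \<le> measure_pmf.prob N (-W) + (1 - c)"
    by (rule tv_core_dir[OF assms])
  have 2: "measure_pmf.prob (bind_pmf N f) (-A) - measure_pmf.prob (bind_pmf M f) (-A) \<le> measure_pmf.prob N (-W) + (1 - c)"
    by (rule tv_core_dir[OF assms])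
  have "measure_pmf.prob P (-A) = 1 - measure_pmf.prob P A" for P :: "'b pmf"
    using measure_pmf.prob_compl[of A P] by (simp add: Compl_eq_Diff_UNIV)
  then show "\<bar>measure_pmf.prob (bind_pmf M f) A - measure_pmf.prob (bind_pmf N f) A\<bar> \<le> measure_pmf.prob N (-W) + (1 - c)"
    using 1 2 by (auto simp: abs_if)
qed simp

lemma abs_prob_diff_le1: "\<bar>measure_pmf.prob P A - measure_pmf.prob Q A\<bar> \<le> 1"
proof -
  have "0 \<le> measure_pmf.prob P A" "measure_pmf.prob P A \<le> 1" "0 \<le> measure_pmf.prob Q A" "measure_pmf.prob Q A \<le> 1"
    by auto
  then show ?thesis by linarith
qed

lemma dTV_nonneg: "0 \<le> dTV P Q"
  unfolding dTV_def
proof -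
  have "\<bar>measure_pmf.prob P {} - measure_pmf.prob Q {}\<bar> \<le> (SUP A. \<bar>measure_pmf.prob P A - measure_pmf.prob Q A\<bar>)"
    by (rule cSUP_upper) (auto intro!: bdd_aboveI[where M=1] abs_prob_diff_le1)
  then show "0 \<le> (SUP A. \<bar>measure_pmf.prob P A - measure_pmf.prob Q A\<bar>)" by simp
qed

lemma dTV_same: "dTV P P = 0"
  unfolding dTV_def by simp




lemma choose_Suc_ratio: "real (m choose Suc j) * real (Suc j) = real (m choose j) * (real m - real j)" if "j \<le> m"
proof -
  have "(m - j) * (m choose j) = Suc j * (m choose Suc j)"
    using binomial_absorb_comp[of m j] binomial_absorption[of j m] by simp
  then have "real (m - j) * real (m choose j) = real (Suc j) * real (m choose Suc j)"
    by (metis of_nat_mult)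
  then show ?thesis using that by (simp add: of_nat_diff algebra_simps)
qed

lemma ratio_id:
  assumes Q: "0 < Q" "Q < 1" and j: "j < m"
  shows "pmf (binomial_pmf m Q) (Suc j) * pmf (poisson_pmf (real m*Q)) j * (real m - real m*Q)
       = pmf (binomial_pmf m Q) j * pmf (poisson_pmf (real m*Q)) (Suc j) * (real m - real j)"
proof -
  define e where "e = m - Suc j"
  have me: "m - j = Suc e" using j by (simp add: e_def)
  have l: "0 < real m * Q" using Q j by simp
  define C0 C1 where "C0 = real (m choose j)" and "C1 = real (m choose Suc j)"
  have key: "C1 * real (Suc j) = C0 * (real m - real j)"
    unfolding C0_def C1_def using choose_Suc_ratio[of j m] j by simp
  define L where "L = real m * Q"
  have "pmf (binomial_pmf m Q) (Suc j) * pmf (poisson_pmf (real m*Q)) j * (real m - real m*Q)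
      = C1 * Q^Suc j * (1-Q)^e * (L^j / fact j * exp (-L)) * (real m * (1 - Q))"
    using Q l by (simp add: C1_def e_def L_def algebra_simps)
  also have "\<dots> = (C1 * real (Suc j)) * Q^j * (1-Q)^(Suc e) * (L ^ Suc j / fact (Suc j) * exp (-L))"
    by (simp add: L_def field_simps del: of_nat_Suc)
  also have "\<dots> = C0 * Q^j * (1-Q)^(m - j) * (L ^ Suc j / fact (Suc j) * exp (-L)) * (real m - real j)"
    by (simp only: key me) (simp only: ac_simps)
  also have "\<dots> = pmf (binomial_pmf m Q) j * pmf (poisson_pmf (real m*Q)) (Suc j) * (real m - real j)"
    using Q l by (simp add: C0_def L_def)
  finally show ?thesis .
qed




lemma exp_neg_le_1_minus: "0 \<le> y \<Longrightarrow> y \<le> 1/2 \<Longrightarrow> exp (-2*y) \<le> 1 - (y::real)"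
proof -
  assume y: "0 \<le> y" "y \<le> 1/2"
  have "1 + 2*y \<le> exp (2*y)" by (rule exp_ge_add_one_self)
  then have "exp (-2*y) \<le> 1 / (1 + 2*y)" using y
    by (simp add: exp_minus field_simps)
  also have "\<dots> \<le> 1 - y"
  proof -
    have "0 \<le> y * (1 - 2*y)" using y by simp
    then have "1 \<le> (1 - y) * (1 + 2*y)" by (simp add: algebra_simps)
    then show ?thesis using y by (simp add: field_simps)
  qed
  finally show ?thesis .
qed

lemma bin_poi_main:
  fixes f :: "nat \<Rightarrow> 'b pmf"
  assumes m: "1 \<le> m" and s: "0 < s" "s \<le> 1/16"
  shows "dTV (bind_pmf (binomial_pmf m (s^2)) f) (bind_pmf (poisson_pmf (real m * s^2)) f) \<le> 10 * s"
proof -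
  define Q where "Q = s^2"
  define l where "l = real m * Q"
  define T where "T = sqrt (real m * s)"
  define W where "W = {j::nat. \<bar>real j - l\<bar> \<le> T}"
  define M where "M = binomial_pmf m Q"
  define N where "N = poisson_pmf l"
  have mpos: "0 < real m" using m by simp
  have ss: "s * s \<le> 1/16 * (1/16)" using s by (intro mult_mono) auto
  have Q: "0 < Q" "Q \<le> 1/256" using s ss unfolding Q_def
    by (auto simp: power2_eq_square)
  have lpos: "0 < l" using Q mpos by (simp add: l_def)
  have Tpos: "0 < T" using s mpos by (simp add: T_def)
  have T2: "T^2 = real m * s" using s mpos by (simp add: T_def)
  have lT: "l / T^2 = s" unfolding T2 l_def Q_def using s mpos by (simp add: power2_eq_square)
  have ml: "real m - l = real m * (1 - Q)" by (simp add: l_def algebra_simps)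
  have mlpos: "0 < real m - l" using Q mpos by (simp add: ml)
  have hT: "T \<le> (real m - l) / 2"
  proof -
    have "real m * s \<le> real m * (1/16)" using s mpos by simp
    also have "\<dots> \<le> real m * real m * ((1 - Q)^2 / 4)"
    proof -
      have "(1/2)^2 \<le> (1 - Q)^2" using Q by (intro power_mono) auto
      then have "1/16 \<le> (1 - Q)^2 / 4" by (simp add: power2_eq_square)
      moreover have "1 \<le> real m" using m by simp
      ultimately have "1 * (1/16) \<le> real m * ((1 - Q)^2 / 4)" by (intro mult_mono) auto
      then show ?thesis using mpos by (simp add: mult.assoc)
    qed
    also have "\<dots> = ((real m - l)/2)^2" by (simp add: ml power2_eq_square)
    finally have "T^2 \<le> ((real m - l)/2)^2" using T2 by simp
    then show ?thesis using Tpos mlpos by (simp add: power2_le_iff_abs_le)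
  qed
  have Wlt: "real j < real m" if "j \<in> W" for j
    using that hT mlpos by (auto simp: W_def abs_le_iff)
  have finW: "finite W"
  proof (rule finite_subset)
    show "W \<subseteq> {..<m}" using Wlt by auto
  qed simp
  have convex: "j \<in> W" if "a \<in> W" "b \<in> W" "a \<le> j" "j \<le> b" for a b j
    using that by (auto simp: W_def abs_le_iff)
  have compW: "-W = {j. T < \<bar>real j - l\<bar>}" by (auto simp: W_def)
  have NW: "measure_pmf.prob N (-W) \<le> s"
    using poi_tail[OF lpos Tpos] by (simp add: N_def compW lT)
  have MWc: "measure_pmf.prob M (-W) \<le> s"
  proof -
    have "measure_pmf.prob M (-W) \<le> real m * Q * (1-Q) / T^2"
      using bin_tail[of Q T m] Q Tpos by (simp add: M_def compW l_def)
    also have "\<dots> \<le> real m * Q / T^2"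
      using Q mpos Tpos by (intro divide_right_mono) (auto simp: mult_left_le)
    finally show ?thesis using lT by (simp add: l_def)
  qed
  define \<kappa> where "\<kappa> = measure_pmf.prob M W"
  have \<kappa>: "1 - s \<le> \<kappa>" "\<kappa> \<le> 1"
    using MWc measure_pmf.prob_compl[of W M] by (auto simp: \<kappa>_def Compl_eq_Diff_UNIV)
  have \<kappa>pos: "0 < \<kappa>" using \<kappa> s by simp
  have Npos: "0 < pmf N j" for j using lpos by (simp add: N_def)
  obtain j0 where j0: "j0 \<in> W" "\<kappa> * pmf N j0 \<le> pmf M j0"
  proof (rule ccontr)
    assume "\<not> thesis"
    with that have lt: "\<And>j. j \<in> W \<Longrightarrow> pmf M j < \<kappa> * pmf N j" by force
    have Wne: "W \<noteq> {}" using \<kappa>pos by (auto simp: \<kappa>_def)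
    have "(\<Sum>j\<in>W. pmf M j) < (\<Sum>j\<in>W. \<kappa> * pmf N j)"
      by (rule sum_strict_mono[OF finW Wne lt])
    also have "\<dots> = \<kappa> * measure_pmf.prob N W"
      by (simp add: sum_distrib_left measure_measure_pmf_finite[OF finW])
    also have "\<dots> \<le> \<kappa>" using \<kappa>pos by (simp add: mult_left_le)
    finally show False by (simp add: \<kappa>_def measure_measure_pmf_finite[OF finW])
  qed
  define b where "b = exp (-2*T/(real m - l))"
  have b: "0 < b" "b \<le> 1" using Tpos mlpos by (auto simp: b_def)
  have fa: "b \<le> (real m - real j) / (real m - l)" if "j \<in> W" for j
  proof (cases "real j \<le> l")
    case True
    then have "1 \<le> (real m - real j) / (real m - l)" using mlpos by simp
    then show ?thesis using b by linarith
  next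
    case False
    define y where "y = (real j - l) / (real m - l)"
    have y: "0 \<le> y" "y \<le> T / (real m - l)" using False that mlpos
      by (auto simp: y_def W_def divide_right_mono)
    have "T / (real m - l) \<le> 1/2" using hT mlpos by (simp add: field_simps)
    then have "y \<le> 1/2" using y by linarith
    have "b \<le> exp (-2*y)" using y by (simp add: b_def)
    also have "\<dots> \<le> 1 - y" by (rule exp_neg_le_1_minus) fact+
    also have "1 - y = (real m - real j) / (real m - l)" using mlpos by (simp add: y_def field_simps)
    finally show ?thesis .
  qed
  have fb: "b \<le> (real m - l) / (real m - real j)" if "j \<in> W" for j
  proof (cases "l \<le> real j")
    case True
    have "real j < real m" using Wlt that by simp
    then have "1 \<le> (real m - l) / (real m - real j)" using True by simp
    then show ?thesis using b by linarith
  next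
    case False
    define z where "z = (l - real j) / (real m - l)"
    have z: "0 \<le> z" "z \<le> T / (real m - l)" using False that mlpos
      by (auto simp: z_def W_def divide_right_mono)
    have "b \<le> exp (-z)" using z Tpos mlpos by (simp add: b_def divide_right_mono)
    also have "\<dots> \<le> 1 / (1 + z)" using exp_ge_add_one_self[of z] z by (simp add: exp_minus field_simps)
    also have "1 / (1 + z) = (real m - l) / (real m - real j)" using mlpos by (simp add: z_def field_simps)
    finally show ?thesis .
  qed
  have Q1: "0 < Q" "Q < 1" using Q by auto
  have ratio: "pmf M (Suc j) * pmf N j * (real m - l) = pmf M j * pmf N (Suc j) * (real m - real j)"
    if "Suc j \<in> W" for j
  proof -
    have "real (Suc j) < real m" using Wlt that by blast
    then have "j < m" by simp
    then show ?thesis using ratio_id[OF Q1 \<open>j < m\<close>] by (simp add: M_def N_def l_def)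
  qed
  have up: "k * b * pmf N (Suc j) \<le> pmf M (Suc j)"
    if "j \<in> W" "Suc j \<in> W" "k * pmf N j \<le> pmf M j" "0 \<le> k" for j k
  proof -
    have "k * b * pmf N (Suc j) * pmf N j \<le> pmf M j * pmf N (Suc j) * b"
      using that Npos[of "Suc j"] b by (simp add: algebra_simps mult_right_mono)
    also have "\<dots> \<le> pmf M j * pmf N (Suc j) * ((real m - real j) / (real m - l))"
      by (intro mult_left_mono fa that(1)) (simp)
    also have "\<dots> = pmf M (Suc j) * pmf N j"
      using ratio[OF that(2)] mlpos by (simp add: field_simps)
    finally show ?thesis using Npos[of j] by simp
  qed
  have down: "k * b * pmf N j \<le> pmf M j"
    if "j \<in> W" "Suc j \<in> W" "k * pmf N (Suc j) \<le> pmf M (Suc j)" "0 \<le> k" for j k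
  proof -
    have mj: "0 < real m - real j" using Wlt that(1) by simp
    have "k * b * pmf N j * pmf N (Suc j) \<le> pmf M (Suc j) * pmf N j * b"
      using that Npos[of j] b by (simp add: algebra_simps mult_right_mono)
    also have "\<dots> \<le> pmf M (Suc j) * pmf N j * ((real m - l) / (real m - real j))"
      by (intro mult_left_mono fb that(1)) (simp)
    also have "\<dots> = pmf M j * pmf N (Suc j)"
      using ratio[OF that(2)] mj by (simp add: field_simps)
    finally show ?thesis using Npos[of "Suc j"] by simp
  qed
  have upd: "\<kappa> * b^d * pmf N (j0 + d) \<le> pmf M (j0 + d)" if "j0 + d \<in> W" for d
    using that
  proof (induction d)
    case 0 then show ?case using j0 by simp
  next
    case (Suc d)
    have "j0 + d \<in> W" by (rule convex[OF j0(1) Suc.prems]) auto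
    then have "\<kappa> * b^d * pmf N (j0 + d) \<le> pmf M (j0 + d)" by (rule Suc.IH)
    from up[OF \<open>j0 + d \<in> W\<close> _ this] Suc.prems \<kappa>pos b show ?case by (simp add: ac_simps)
  qed
  have downd: "\<kappa> * b^d * pmf N (j0 - d) \<le> pmf M (j0 - d)" if "d \<le> j0" "j0 - d \<in> W" for d
    using that
  proof (induction d)
    case 0 then show ?case using j0 by simp
  next
    case (Suc d)
    have "j0 - d \<in> W" by (rule convex[OF Suc.prems(2) j0(1)]) auto
    then have IH: "\<kappa> * b^d * pmf N (j0 - d) \<le> pmf M (j0 - d)" using Suc by simp
    have e: "j0 - d = Suc (j0 - Suc d)" using Suc.prems by simp
    from down[of "j0 - Suc d" "\<kappa> * b^d"] IH Suc.prems \<open>j0 - d \<in> W\<close> \<kappa>pos b e show ?case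
      by (simp add: ac_simps)
  qed
  define x where "x = 4 * T^2 / (real m - l)"
  define c where "c = \<kappa> * exp (-x)"
  have bpow: "exp (-x) \<le> b^d" if "real d \<le> 2*T" for d
  proof -
    have "b^d = exp (real d * (-2*T/(real m - l)))" unfolding b_def by (rule exp_of_nat_mult[symmetric])
    moreover have "-x \<le> real d * (-2*T/(real m - l))"
    proof -
      have "real d * (2*T/(real m - l)) \<le> 2*T * (2*T/(real m - l))"
        using that Tpos mlpos by (intro mult_right_mono) auto
      then show ?thesis by (simp add: x_def power2_eq_square)
    qed
    ultimately show ?thesis by simp
  qed
  have cW: "c * pmf N j \<le> pmf M j" if "j \<in> W" for j
  proof (cases "j0 \<le> j")
    case True
    define d where "d = j - j0"
    have jd: "j = j0 + d" using True by (simp add: d_def)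
    have "real d \<le> 2*T" using that j0(1) True by (auto simp: W_def d_def abs_le_iff of_nat_diff)
    then have "c * pmf N j \<le> \<kappa> * b^d * pmf N j"
      using bpow \<kappa>pos by (simp add: c_def mult_right_mono)
    also have "\<dots> \<le> pmf M j" using upd[of d] that jd by simp
    finally show ?thesis .
  next
    case False
    define d where "d = j0 - j"
    have jd: "j = j0 - d" "d \<le> j0" using False by (auto simp: d_def)
    have "real d \<le> 2*T" using that j0(1) False by (auto simp: W_def d_def abs_le_iff of_nat_diff)
    then have "c * pmf N j \<le> \<kappa> * b^d * pmf N j"
      using bpow \<kappa>pos by (simp add: c_def mult_right_mono)
    also have "\<dots> \<le> pmf M j" using downd[of d] that jd by simp
    finally show ?thesis .
  qed
  have c01: "0 \<le> c" "c \<le> 1" using \<kappa> \<kappa>pos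
    by (auto simp: c_def x_def intro!: mult_le_one) (use Tpos mlpos in auto)
  have x8: "x \<le> 8 * s"
  proof -
    have "x = 4 * s / (1 - Q)" using mpos Q by (simp add: x_def T2 ml)
    also have "\<dots> \<le> 4 * s / (1/2)" using Q s by (intro divide_left_mono) auto
    finally show "x \<le> 8 * s" by simp
  qed
  have x0: "0 \<le> x" using Tpos mlpos by (simp add: x_def)
  have "dTV (bind_pmf M f) (bind_pmf N f) \<le> measure_pmf.prob N (-W) + (1 - c)"
    by (rule dTV_bind_le[OF finW c01 cW])
  also have "\<dots> \<le> s + (1 - (1 - s) * (1 - x))"
  proof -
    have "1 - x \<le> exp (-x)" using exp_ge_add_one_self[of "-x"] by simp
    then have "(1 - s) * (1 - x) \<le> \<kappa> * exp (-x)"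
      using \<kappa> s x8 by (intro mult_mono) auto
    then show ?thesis using NW by (simp add: c_def)
  qed
  also have "\<dots> \<le> 10 * s"
  proof -
    note x8 x0
    moreover have "0 \<le> s * x" using s \<open>0 \<le> x\<close> by simp
    moreover have "s + (1 - (1 - s) * (1 - x)) = 2 * s + x - s * x" by (simp add: algebra_simps)
    ultimately show ?thesis using s by linarith
  qed
  finally show ?thesis by (simp add: M_def N_def l_def Q_def)
qed




definition Dp :: "nat \<Rightarrow> real \<Rightarrow> nat set pmf" where
  "Dp n p = map_pmf (\<lambda>g. {v\<in>{..<n}. g v}) (Pi_pmf {..<n} False (\<lambda>_. bernoulli_pmf p))"

lemma pmf_Dp:
  assumes p: "0 \<le> p" "p \<le> 1"
  shows "pmf (Dp n p) S = (if S \<subseteq> {..<n} then p ^ card S * (1-p) ^ (n - card S) else 0)"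
proof (cases "S \<subseteq> {..<n}")
  case True
  have pre: "(\<lambda>g. {v\<in>{..<n}. g v}) -` {S} = Pi {..<n} (\<lambda>v. {v \<in> S})"
    using True by (auto simp: Pi_def)
  have "pmf (Dp n p) S = (\<Prod>v\<in>{..<n}. measure_pmf.prob (bernoulli_pmf p) {v \<in> S})"
    unfolding Dp_def pmf_map pre by (rule measure_Pi_pmf_Pi) simp
  also have "\<dots> = (\<Prod>v\<in>{..<n}. if v \<in> S then p else 1 - p)"
    using p by (intro prod.cong) (auto simp: measure_pmf_single)
  also have "\<dots> = p ^ card S * (1-p) ^ (n - card S)"
  proof -
    have "(\<Prod>v\<in>{..<n}. if v \<in> S then p else 1 - p) = prod (\<lambda>_. p) ({..<n} \<inter> {v. v \<in> S}) * prod (\<lambda>_. 1 - p) ({..<n} \<inter> - {v. v \<in> S})"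
      by (rule prod.If_cases) simp
    also have "{..<n} \<inter> {v. v \<in> S} = S" using True by auto
    also have "{..<n} \<inter> - {v. v \<in> S} = {..<n} - S" by auto
    finally have e: "(\<Prod>v\<in>{..<n}. if v \<in> S then p else 1 - p) = p ^ card S * (1-p) ^ card ({..<n} - S)" by simp
    have "card ({..<n} - S) = n - card S" using True by (simp add: card_Diff_subset finite_subset)
    then show ?thesis using e by simp
  qed
  finally show ?thesis using True by simp
next
  case False
  have "(\<lambda>g. {v\<in>{..<n}. g v}) -` {S} = {}" using False by auto
  then show ?thesis using False by (simp add: Dp_def pmf_map)
qed

lemma set_pmf_Dp: "set_pmf (Dp n p) \<subseteq> Pow {..<n}"
  by (auto simp: Dp_def)

lemma Pow_eq_unique:
  fixes X Y :: "'a set pmf"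
  assumes R: "finite R" and X: "set_pmf X \<subseteq> Pow R" and Y: "set_pmf Y \<subseteq> Pow R"
    and eq: "\<And>G. G \<subseteq> R \<Longrightarrow> measure_pmf.prob X (Pow G) = measure_pmf.prob Y (Pow G)"
  shows "X = Y"
proof (rule pmf_eqI)
  fix H
  show "pmf X H = pmf Y H"
  proof (cases "H \<subseteq> R")
    case False
    then have "H \<notin> set_pmf X" "H \<notin> set_pmf Y" using X Y by auto
    then show ?thesis by (simp add: set_pmf_eq)
  next
    case True
    then show ?thesis
    proof (induction "card H" arbitrary: H rule: less_induct)
      case less
      have fH: "finite H" using less.prems R finite_subset by auto
      have split: "measure_pmf.prob Z (Pow H) = pmf Z H + (\<Sum>H'\<in>Pow H - {H}. pmf Z H')" for Z :: "'a set pmf"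
      proof -
        have "measure_pmf.prob Z (Pow H) = (\<Sum>H'\<in>Pow H. pmf Z H')"
          using fH by (simp add: measure_measure_pmf_finite)
        also have "\<dots> = pmf Z H + (\<Sum>H'\<in>Pow H - {H}. pmf Z H')"
          using fH by (subst sum.remove[of _ H]) auto
        finally show ?thesis .
      qed
      have "(\<Sum>H'\<in>Pow H - {H}. pmf X H') = (\<Sum>H'\<in>Pow H - {H}. pmf Y H')"
      proof (intro sum.cong refl)
        fix H' assume H': "H' \<in> Pow H - {H}"
        then have "H' \<subset> H" by auto
        then have "card H' < card H" using fH by (simp add: psubset_card_mono)
        then show "pmf X H' = pmf Y H'" using less.hyps[of H'] \<open>H' \<subset> H\<close> less.prems by auto
      qed
      then show ?case using split[of X] split[of Y] eq[OF less.prems] by simp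
    qed
  qed
qed

lemma rim_curry:
  "map_pmf (\<lambda>f w v. f (v, w)) (rim n m p) =
   Pi_pmf {..<m} (\<lambda>_. False) (\<lambda>_. Pi_pmf {..<n} False (\<lambda>_. bernoulli_pmf p))"
proof (rule pmf_eqI)
  fix h :: "nat \<Rightarrow> nat \<Rightarrow> bool"
  define g where "g = (\<lambda>(v, w). h w v)"
  have hg: "h = (\<lambda>w v. g (v, w))" by (simp add: g_def)
  have inj: "inj (\<lambda>(f::nat \<times> nat \<Rightarrow> bool) w v. f (v, w))"
    by (auto simp: inj_def fun_eq_iff)
  have "pmf (map_pmf (\<lambda>f w v. f (v, w)) (rim n m p)) h = pmf (rim n m p) g"
    unfolding hg by (rule pmf_map_inj'[OF inj])
  also have "\<dots> = (if (\<forall>x. x \<notin> {..<n} \<times> {..<m} \<longrightarrow> g x = False) then \<Prod>x\<in>{..<n} \<times> {..<m}. pmf (bernoulli_pmf p) (g x) else 0)"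
    unfolding rim_def by (rule pmf_Pi) simp
  also have "\<dots> = pmf (Pi_pmf {..<m} (\<lambda>_. False) (\<lambda>_. Pi_pmf {..<n} False (\<lambda>_. bernoulli_pmf p))) h"
  proof (cases "\<forall>x. x \<notin> {..<n} \<times> {..<m} \<longrightarrow> g x = False")
    case True
    have "(\<Prod>x\<in>{..<n} \<times> {..<m}. pmf (bernoulli_pmf p) (g x)) = (\<Prod>w\<in>{..<m}. \<Prod>v\<in>{..<n}. pmf (bernoulli_pmf p) (h w v))"
      by (subst prod.cartesian_product') (subst prod.swap, simp add: g_def)
    also have "\<dots> = (\<Prod>w\<in>{..<m}. pmf (Pi_pmf {..<n} False (\<lambda>_. bernoulli_pmf p)) (h w))"
      using True by (intro prod.cong refl) (subst pmf_Pi, auto simp: g_def)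
    finally show ?thesis using True
      by (subst pmf_Pi) (auto simp: g_def fun_eq_iff)
  next
    case False
    then obtain v w where vw: "(v, w) \<notin> {..<n} \<times> {..<m}" "h w v" by (auto simp: g_def)
    show ?thesis
    proof (cases "w < m")
      case True
      then have "v \<ge> n" using vw by auto
      have "pmf (Pi_pmf {..<n} False (\<lambda>_. bernoulli_pmf p)) (h w) = 0"
        using vw \<open>v \<ge> n\<close> by (subst pmf_Pi) auto
      then have "(\<Prod>w\<in>{..<m}. pmf (Pi_pmf {..<n} False (\<lambda>_. bernoulli_pmf p)) (h w)) = 0"
        using True by (intro prod_zero) auto
      then show ?thesis using False by (subst pmf_Pi) auto
    next
      case False
      then have "h w \<noteq> (\<lambda>_. False)" using vw by auto
      then show ?thesis using False \<open>\<not> (\<forall>x. x \<notin> {..<n} \<times> {..<m} \<longrightarrow> g x = False)\<close>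
        by (subst pmf_Pi) auto
    qed
  qed
  finally show "pmf (map_pmf (\<lambda>f w v. f (v, w)) (rim n m p)) h = pmf (Pi_pmf {..<m} (\<lambda>_. False) (\<lambda>_. Pi_pmf {..<n} False (\<lambda>_. bernoulli_pmf p))) h" .
qed




definition RR :: "nat \<Rightarrow> nat \<Rightarrow> nat set set" where
  "RR n K = {S. S \<subseteq> {..<n} \<and> 2 \<le> card S \<and> card S \<le> K}"

definition Sk :: "nat \<Rightarrow> nat \<Rightarrow> nat set set" where
  "Sk k n = {S. S \<subseteq> {..<n} \<and> card S = k}"

lemma finite_RR: "finite (RR n K)"
  by (rule finite_subset[of _ "Pow {..<n}"]) (auto simp: RR_def)

lemma finite_Sk: "finite (Sk k n)"
  by (rule finite_subset[of _ "Pow {..<n}"]) (auto simp: Sk_def)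

lemma RR_minus_UN: "RR n K - G = (\<Union>k\<in>{2..K}. Sk k n - G)"
  by (auto simp: RR_def Sk_def)

lemma sum_RR_minus:
  "(\<Sum>S\<in>RR n K - G. f S) = (\<Sum>k\<in>{2..K}. \<Sum>S\<in>Sk k n - G. f S)"
  unfolding RR_minus_UN
  by (rule sum.UNION_disjoint) (auto simp: finite_Sk Sk_def)

lemma union_rim_Pow:
  "measure_pmf.prob (union_rim K n m p) (Pow G) = (1 - measure_pmf.prob (Dp n p) (RR n K - G)) ^ m"
proof -
  define cur where "cur = (\<lambda>(f::nat \<times> nat \<Rightarrow> bool) w v. f (v, w))"
  define C where "C = {g. {v\<in>{..<n}. g v} \<notin> RR n K - G}"
  have U: "(\<Union>k\<in>{2..K}. Hk_edges k n m f) = {Vobj n f w | w. w < m \<and> Vobj n f w \<in> RR n K}" for f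
  proof -
    have V: "Vobj n f w \<subseteq> {..<n}" for w by (auto simp: Vobj_def)
    show ?thesis
    proof (intro set_eqI iffI)
      fix X assume "X \<in> (\<Union>k\<in>{2..K}. Hk_edges k n m f)"
      then obtain k w where kw: "k \<in> {2..K}" "w < m" "card (Vobj n f w) = k" "X = Vobj n f w"
        unfolding Hk_edges_def by blast
      then have "Vobj n f w \<in> RR n K" using V[of w] by (simp add: RR_def)
      then show "X \<in> {Vobj n f w | w. w < m \<and> Vobj n f w \<in> RR n K}" using kw by blast
    next
      fix X assume "X \<in> {Vobj n f w | w. w < m \<and> Vobj n f w \<in> RR n K}"
      then obtain w where w: "w < m" "Vobj n f w \<in> RR n K" "X = Vobj n f w" by blast
      then have "card (Vobj n f w) \<in> {2..K}" by (simp add: RR_def)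
      moreover have "X \<in> Hk_edges (card (Vobj n f w)) n m f" using w unfolding Hk_edges_def by blast
      ultimately show "X \<in> (\<Union>k\<in>{2..K}. Hk_edges k n m f)" by blast
    qed
  qed
  have cV: "{v\<in>{..<n}. cur f w v} = Vobj n f w" for f w by (simp add: cur_def Vobj_def)
  have pre: "(\<lambda>f. \<Union>k\<in>{2..K}. Hk_edges k n m f) -` Pow G = cur -` Pi {..<m} (\<lambda>_. C)"
  proof (rule set_eqI)
    fix f
    have sc: "{Vobj n f w | w. w < m \<and> Vobj n f w \<in> RR n K} \<subseteq> G \<longleftrightarrow> (\<forall>w. w < m \<and> Vobj n f w \<in> RR n K \<longrightarrow> Vobj n f w \<in> G)"
      by blast
    have "f \<in> (\<lambda>f. \<Union>k\<in>{2..K}. Hk_edges k n m f) -` Pow G \<longleftrightarrow> {Vobj n f w | w. w < m \<and> Vobj n f w \<in> RR n K} \<subseteq> G"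
      by (simp only: vimage_eq Pow_iff U)
    also have "\<dots> \<longleftrightarrow> (\<forall>w. w < m \<and> Vobj n f w \<in> RR n K \<longrightarrow> Vobj n f w \<in> G)" by (rule sc)
    also have "\<dots> \<longleftrightarrow> (\<forall>w. w \<in> {..<m} \<longrightarrow> cur f w \<in> C)"
      unfolding C_def mem_Collect_eq cV by auto
    also have "\<dots> \<longleftrightarrow> f \<in> cur -` Pi {..<m} (\<lambda>_. C)"
      by (simp only: vimage_eq Pi_def mem_Collect_eq)
    finally show "f \<in> (\<lambda>f. \<Union>k\<in>{2..K}. Hk_edges k n m f) -` Pow G \<longleftrightarrow> f \<in> cur -` Pi {..<m} (\<lambda>_. C)" .
  qed
  have "measure_pmf.prob (union_rim K n m p) (Pow G) = measure_pmf.prob (map_pmf cur (rim n m p)) (Pi {..<m} (\<lambda>_. C))"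
    unfolding union_rim_def by (simp add: pre)
  also have "\<dots> = (\<Prod>w\<in>{..<m}. measure_pmf.prob (Pi_pmf {..<n} False (\<lambda>_. bernoulli_pmf p)) C)"
    unfolding cur_def rim_curry by (rule measure_Pi_pmf_Pi) simp
  also have "measure_pmf.prob (Pi_pmf {..<n} False (\<lambda>_. bernoulli_pmf p)) C = measure_pmf.prob (Dp n p) (- (RR n K - G))"
    by (simp add: Dp_def C_def vimage_def)
  also have "\<dots> = 1 - measure_pmf.prob (Dp n p) (RR n K - G)"
    using measure_pmf.prob_compl[of "RR n K - G" "Dp n p"] by (simp add: Compl_eq_Diff_UNIV)
  finally show ?thesis by simp
qed

lemma set_union_rim: "set_pmf (union_rim K n m p) \<subseteq> Pow (RR n K)"
  by (auto simp: union_rim_def Hk_edges_def Vobj_def RR_def)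

lemma union_binom_Pow:
  fixes m :: nat and p :: real
  assumes p: "0 \<le> p" "p \<le> 1"
  shows "measure_pmf.prob (union_binom K n (\<lambda>k. 1 - exp (- (real m * p ^ k * (1 - p) ^ (n - k))))) (Pow G)
       = exp (- (real m * measure_pmf.prob (Dp n p) (RR n K - G)))"
proof -
  define x where "x k = real m * p ^ k * (1 - p) ^ (n - k)" for k
  have x0: "0 \<le> x k" for k using p by (simp add: x_def)
  define r where "r k = 1 - exp (- x k)" for k
  have r01: "0 \<le> r k" "r k \<le> 1" for k using x0[of k] by (auto simp: r_def)
  have bh: "measure_pmf.prob (binom_hyp k n (r k)) (Pow G) = exp (- (real (card (Sk k n - G)) * x k))" for k
  proof -
    have pre: "(\<lambda>g. {S. S \<subseteq> {..<n} \<and> card S = k \<and> g S}) -` Pow G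
        = Pi (Sk k n) (\<lambda>S. if S \<in> G then UNIV else {False})"
      by (auto simp: Sk_def Pi_def split: if_splits)
    have "measure_pmf.prob (binom_hyp k n (r k)) (Pow G)
        = (\<Prod>S\<in>Sk k n. measure_pmf.prob (bernoulli_pmf (r k)) (if S \<in> G then UNIV else {False}))"
      unfolding binom_hyp_def measure_map_pmf pre Sk_def[symmetric]
      by (rule measure_Pi_pmf_Pi) (rule finite_Sk)
    also have "\<dots> = (\<Prod>S\<in>Sk k n. if S \<in> G then 1 else exp (- x k))"
      using r01[of k] by (intro prod.cong refl) (auto simp: measure_pmf_single r_def)
    also have "\<dots> = (\<Prod>S\<in>Sk k n - G. exp (- x k))"
      by (rule prod.mono_neutral_cong_right) (auto simp: finite_Sk)
    also have "\<dots> = exp (- (real (card (Sk k n - G)) * x k))"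
      by (simp add: exp_of_nat_mult[symmetric])
    finally show ?thesis .
  qed
  have pre2: "(\<lambda>H. \<Union>k\<in>{2..K}. H k) -` Pow G = Pi {2..K} (\<lambda>_. Pow G)"
    by (simp add: set_eq_iff Pi_def UN_subset_iff Ball_def)
  have "measure_pmf.prob (union_binom K n r) (Pow G) = (\<Prod>k\<in>{2..K}. measure_pmf.prob (binom_hyp k n (r k)) (Pow G))"
    unfolding union_binom_def measure_map_pmf pre2 by (rule measure_Pi_pmf_Pi) simp
  also have "\<dots> = (\<Prod>k\<in>{2..K}. exp (- (real (card (Sk k n - G)) * x k)))"
    by (simp add: bh)
  also have "\<dots> = exp (- (\<Sum>k\<in>{2..K}. real (card (Sk k n - G)) * x k))"
    by (simp add: exp_sum[symmetric] sum_negf)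
  also have "(\<Sum>k\<in>{2..K}. real (card (Sk k n - G)) * x k) = real m * measure_pmf.prob (Dp n p) (RR n K - G)"
  proof -
    have "measure_pmf.prob (Dp n p) (RR n K - G) = (\<Sum>S\<in>RR n K - G. pmf (Dp n p) S)"
      by (rule measure_measure_pmf_finite) (use finite_RR in auto)
    also have "\<dots> = (\<Sum>k\<in>{2..K}. \<Sum>S\<in>Sk k n - G. pmf (Dp n p) S)"
      by (rule sum_RR_minus)
    also have "\<dots> = (\<Sum>k\<in>{2..K}. \<Sum>S\<in>Sk k n - G. p ^ k * (1 - p) ^ (n - k))"
      using p by (intro sum.cong refl) (auto simp: pmf_Dp Sk_def)
    also have "\<dots> = (\<Sum>k\<in>{2..K}. real (card (Sk k n - G)) * (p ^ k * (1 - p) ^ (n - k)))"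
      by simp
    finally show ?thesis by (simp add: sum_distrib_left x_def algebra_simps)
  qed
  finally show ?thesis by (simp add: r_def x_def)
qed

lemma set_union_binom: "set_pmf (union_binom K n r) \<subseteq> Pow (RR n K)"
proof
  fix X assume X: "X \<in> set_pmf (union_binom K n r)"
  then obtain H where H: "H \<in> set_pmf (Pi_pmf {2..K} {} (\<lambda>k. binom_hyp k n (r k)))" and XH: "X = (\<Union>k\<in>{2..K}. H k)"
    by (auto simp: union_binom_def)
  have "H k \<in> set_pmf (binom_hyp k n (r k))" if "k \<in> {2..K}" for k
    using H that by (simp add: set_Pi_pmf PiE_dflt_def)
  moreover have "set_pmf (binom_hyp k n (r k)) \<subseteq> Pow (Sk k n)" for k
    by (auto simp: binom_hyp_def Sk_def)
  moreover have "Sk k n \<subseteq> RR n K" if "k \<in> {2..K}" for k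
    using that by (auto simp: Sk_def RR_def)
  ultimately have "H k \<subseteq> RR n K" if "k \<in> {2..K}" for k
    using that by blast
  then show "X \<in> Pow (RR n K)" unfolding XH by blast
qed




definition Uj :: "nat set pmf \<Rightarrow> nat \<Rightarrow> nat set set pmf" where
  "Uj \<tau> j = map_pmf (\<lambda>f. f ` {..<j}) (Pi_pmf {..<j} {} (\<lambda>_. \<tau>))"

lemma Uj_Pow: "measure_pmf.prob (Uj \<tau> j) (Pow G) = measure_pmf.prob \<tau> G ^ j"
proof -
  have pre: "(\<lambda>f. f ` {..<j}) -` Pow G = Pi {..<j} (\<lambda>_. G)" by (auto simp: Pi_def)
  show ?thesis unfolding Uj_def measure_map_pmf pre
    by (subst measure_Pi_pmf_Pi) auto
qed

lemma set_Uj: "set_pmf \<tau> \<subseteq> R \<Longrightarrow> set_pmf (Uj \<tau> j) \<subseteq> Pow R"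
  by (auto simp: Uj_def set_Pi_pmf PiE_dflt_def)

lemma expect_sums:
  fixes M :: "nat pmf" and g :: "nat \<Rightarrow> real"
  assumes g: "\<And>j. 0 \<le> g j" and s: "(\<lambda>j. pmf M j * g j) sums v"
  shows "measure_pmf.expectation M g = v"
proof -
  have nn: "(\<integral>\<^sup>+ j. ennreal (g j) \<partial>measure_pmf M) = ennreal v"
  proof -
    have "(\<integral>\<^sup>+ j. ennreal (g j) \<partial>measure_pmf M) = (\<integral>\<^sup>+ j. ennreal (pmf M j * g j) \<partial>count_space UNIV)"
      by (simp add: nn_integral_measure_pmf ennreal_mult g)
    also have "\<dots> = (\<Sum>j. ennreal (pmf M j * g j))"
      by (simp add: nn_integral_count_space_nat)
    also have "\<dots> = ennreal v"
      using s g by (subst suminf_ennreal2) (auto simp: sums_summable[OF s] sums_unique[OF s, symmetric])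
    finally show ?thesis .
  qed
  have v0: "0 \<le> v" using s g sums_le[OF _ sums_zero s] by (metis pmf_nonneg zero_le_mult_iff)
  have int: "integrable M g"
    using nn g by (intro integrableI_nonneg) auto
  have "ennreal (measure_pmf.expectation M g) = ennreal v"
    using nn_integral_eq_integral[OF int] g nn by simp
  then show ?thesis using v0 by (simp add: Bochner_Integration.integral_nonneg g)
qed

lemma bind_binom_Pow:
  assumes q: "0 \<le> q" "q \<le> 1"
  shows "measure_pmf.prob (bind_pmf (binomial_pmf m q) (Uj \<tau>)) (Pow G) = (1 - q + q * measure_pmf.prob \<tau> G) ^ m"
proof -
  define t where "t = measure_pmf.prob \<tau> G"
  have "measure_pmf.prob (bind_pmf (binomial_pmf m q) (Uj \<tau>)) (Pow G)
      = measure_pmf.expectation (binomial_pmf m q) (\<lambda>j. t ^ j)"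
    by (simp add: prob_bind_expect Uj_Pow t_def)
  also have "\<dots> = (\<Sum>k\<le>m. real (m choose k) * q ^ k * (1 - q) ^ (m - k) * t ^ k)"
    using q by (subst expectation_binomial_pmf') auto
  also have "\<dots> = (q * t + (1 - q)) ^ m"
    by (subst binomial_ring) (simp add: atLeast0AtMost power_mult_distrib algebra_simps)
  finally show ?thesis by (simp add: t_def algebra_simps)
qed

lemma bind_poi_Pow:
  assumes l: "0 < l"
  shows "measure_pmf.prob (bind_pmf (poisson_pmf l) (Uj \<tau>)) (Pow G) = exp (- l + l * measure_pmf.prob \<tau> G)"
proof -
  define t where "t = measure_pmf.prob \<tau> G"
  have "measure_pmf.prob (bind_pmf (poisson_pmf l) (Uj \<tau>)) (Pow G)
      = measure_pmf.expectation (poisson_pmf l) (\<lambda>j. t ^ j)"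
    by (simp add: prob_bind_expect Uj_Pow t_def)
  also have "\<dots> = exp (-l) * exp (l * t)"
  proof (rule expect_sums)
    show "0 \<le> t ^ j" for j by (simp add: t_def)
    have "(\<lambda>j. exp (-l) * ((l * t) ^ j / fact j)) sums (exp (-l) * exp (l * t))"
      by (intro sums_mult poi_f_sums)
    then show "(\<lambda>j. pmf (poisson_pmf l) j * t ^ j) sums (exp (-l) * exp (l * t))"
      using l by (simp add: power_mult_distrib algebra_simps)
  qed
  finally show ?thesis by (simp add: t_def exp_add[symmetric])
qed




lemma cond_prob:
  fixes D :: "'a pmf"
  assumes R: "finite R" and Q: "0 < measure_pmf.prob D R"
  shows "measure_pmf.prob D R * measure_pmf.prob (cond_pmf D R) G = measure_pmf.prob D (G \<inter> R)"
proof -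
  have ne: "set_pmf D \<inter> R \<noteq> {}" using Q measure_pmf_zero_iff[of D R] by auto
  define Q' where "Q' = measure_pmf.prob D R"
  have fin: "finite (G \<inter> (set_pmf D \<inter> R))" using R by auto
  have "measure_pmf.prob (cond_pmf D R) G = measure_pmf.prob (cond_pmf D R) (G \<inter> set_pmf (cond_pmf D R))"
    by (simp add: measure_Int_set_pmf)
  also have "\<dots> = (\<Sum>x\<in>G \<inter> (set_pmf D \<inter> R). pmf (cond_pmf D R) x)"
    using ne fin by (simp add: measure_measure_pmf_finite set_cond_pmf)
  also have "\<dots> = (\<Sum>x\<in>G \<inter> (set_pmf D \<inter> R). pmf D x / Q')"
    using ne by (intro sum.cong refl) (auto simp: pmf_cond Q'_def)
  also have "\<dots> = measure_pmf.prob D (G \<inter> (set_pmf D \<inter> R)) / Q'"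
    using fin by (simp add: measure_measure_pmf_finite sum_divide_distrib)
  also have "G \<inter> (set_pmf D \<inter> R) = (G \<inter> R) \<inter> set_pmf D" by auto
  also have "measure_pmf.prob D ((G \<inter> R) \<inter> set_pmf D) = measure_pmf.prob D (G \<inter> R)"
    by (rule measure_Int_set_pmf)
  finally show ?thesis using Q by (simp add: Q'_def)
qed

lemma prob_RR_minus:
  "measure_pmf.prob D (RR n K - G) = measure_pmf.prob D (RR n K) - measure_pmf.prob D (G \<inter> RR n K)"
proof -
  have "RR n K - G = RR n K - (G \<inter> RR n K)" by auto
  then show ?thesis by (simp add: measure_pmf.finite_measure_Diff)
qed

lemma decomp:
  assumes p: "0 \<le> p" "p \<le> 1" and Qpos: "0 < measure_pmf.prob (Dp n p) (RR n K)" and m: "0 < m"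
  shows "union_rim K n m p = bind_pmf (binomial_pmf m (measure_pmf.prob (Dp n p) (RR n K))) (Uj (cond_pmf (Dp n p) (RR n K)))"
    and "union_binom K n (\<lambda>k. 1 - exp (- (real m * p ^ k * (1 - p) ^ (n - k))))
         = bind_pmf (poisson_pmf (real m * measure_pmf.prob (Dp n p) (RR n K))) (Uj (cond_pmf (Dp n p) (RR n K)))"
proof -
  define Q where "Q = measure_pmf.prob (Dp n p) (RR n K)"
  define \<tau> where "\<tau> = cond_pmf (Dp n p) (RR n K)"
  have ne: "set_pmf (Dp n p) \<inter> RR n K \<noteq> {}" using Qpos measure_pmf_zero_iff[of "Dp n p" "RR n K"] by auto
  have setU: "set_pmf (Uj \<tau> j) \<subseteq> Pow (RR n K)" for j
    by (rule set_Uj) (use ne in \<open>auto simp: \<tau>_def\<close>)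
  have cp: "Q * measure_pmf.prob \<tau> G = measure_pmf.prob (Dp n p) (G \<inter> RR n K)" for G
    unfolding Q_def \<tau>_def by (rule cond_prob[OF finite_RR Qpos])
  have Q01: "0 \<le> Q" "Q \<le> 1" by (auto simp: Q_def)
  show "union_rim K n m p = bind_pmf (binomial_pmf m (measure_pmf.prob (Dp n p) (RR n K))) (Uj (cond_pmf (Dp n p) (RR n K)))"
    unfolding Q_def[symmetric] \<tau>_def[symmetric]
  proof (rule Pow_eq_unique[OF finite_RR set_union_rim])
    show "set_pmf (bind_pmf (binomial_pmf m Q) (Uj \<tau>)) \<subseteq> Pow (RR n K)" using setU by auto
    fix G
    show "measure_pmf.prob (union_rim K n m p) (Pow G) = measure_pmf.prob (bind_pmf (binomial_pmf m Q) (Uj \<tau>)) (Pow G)"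
      unfolding union_rim_Pow bind_binom_Pow[OF Q01] prob_RR_minus cp by (simp add: algebra_simps Q_def)
  qed
  show "union_binom K n (\<lambda>k. 1 - exp (- (real m * p ^ k * (1 - p) ^ (n - k))))
         = bind_pmf (poisson_pmf (real m * measure_pmf.prob (Dp n p) (RR n K))) (Uj (cond_pmf (Dp n p) (RR n K)))"
    unfolding Q_def[symmetric] \<tau>_def[symmetric]
  proof (rule Pow_eq_unique[OF finite_RR set_union_binom])
    show "set_pmf (bind_pmf (poisson_pmf (real m * Q)) (Uj \<tau>)) \<subseteq> Pow (RR n K)" using setU by auto
    fix G
    have lpos: "0 < real m * Q" using m Qpos by (simp add: Q_def)
    have "real m * Q * measure_pmf.prob \<tau> G = real m * measure_pmf.prob (Dp n p) (G \<inter> RR n K)"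
      using cp[of G] by (simp add: mult.assoc)
    then have e: "real m * (measure_pmf.prob (Dp n p) (RR n K) * measure_pmf.prob \<tau> G) = real m * measure_pmf.prob (Dp n p) (G \<inter> RR n K)"
      by (simp add: Q_def mult.assoc)
    show "measure_pmf.prob (union_binom K n (\<lambda>k. 1 - exp (- (real m * p ^ k * (1 - p) ^ (n - k))))) (Pow G)
        = measure_pmf.prob (bind_pmf (poisson_pmf (real m * Q)) (Uj \<tau>)) (Pow G)"
    proof -
      have 1: "measure_pmf.prob (union_binom K n (\<lambda>k. 1 - exp (- (real m * p ^ k * (1 - p) ^ (n - k))))) (Pow G)
          = exp (- (real m * (Q - measure_pmf.prob (Dp n p) (G \<inter> RR n K))))"
        by (simp only: union_binom_Pow[OF p] prob_RR_minus Q_def)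
      have 2: "measure_pmf.prob (bind_pmf (poisson_pmf (real m * Q)) (Uj \<tau>)) (Pow G) = exp (- (real m * Q) + real m * Q * measure_pmf.prob \<tau> G)"
        by (rule bind_poi_Pow[OF lpos])
      show ?thesis unfolding 1 2 \<open>real m * Q * measure_pmf.prob \<tau> G = _\<close> by (simp add: algebra_simps)
    qed
  qed
qed

lemma zero_case:
  assumes p: "0 \<le> p" "p \<le> 1" and Q0: "measure_pmf.prob (Dp n p) (RR n K) = 0"
  shows "union_rim K n m p = union_binom K n (\<lambda>k. 1 - exp (- (real m * p ^ k * (1 - p) ^ (n - k))))"
proof (rule Pow_eq_unique[OF finite_RR set_union_rim set_union_binom])
  fix G
  have "measure_pmf.prob (Dp n p) (RR n K - G) \<le> measure_pmf.prob (Dp n p) (RR n K)"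
    by (rule measure_pmf.finite_measure_mono) auto
  then have z: "measure_pmf.prob (Dp n p) (RR n K - G) = 0" using Q0 by (simp add: order_antisym)
  show "measure_pmf.prob (union_rim K n m p) (Pow G) = measure_pmf.prob (union_binom K n (\<lambda>k. 1 - exp (- (real m * p ^ k * (1 - p) ^ (n - k))))) (Pow G)"
    unfolding union_rim_Pow union_binom_Pow[OF p] z by simp
qed




lemma Q_bound:
  assumes p: "0 \<le> p" "p \<le> 1" and np: "real n * p \<le> 1"
  shows "measure_pmf.prob (Dp n p) (RR n K) \<le> real K * (real n * p)^2"
proof -
  have "measure_pmf.prob (Dp n p) (RR n K) = (\<Sum>S\<in>RR n K - {}. pmf (Dp n p) S)"
    by (simp add: measure_measure_pmf_finite finite_RR)
  also have "\<dots> = (\<Sum>k\<in>{2..K}. \<Sum>S\<in>Sk k n - {}. pmf (Dp n p) S)"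
    by (rule sum_RR_minus)
  also have "\<dots> = (\<Sum>k\<in>{2..K}. real (card (Sk k n)) * (p ^ k * (1 - p) ^ (n - k)))"
    using p by (intro sum.cong refl) (auto simp: pmf_Dp Sk_def)
  also have "\<dots> \<le> (\<Sum>k\<in>{2..K}. (real n * p)^2)"
  proof (rule sum_mono)
    fix k assume k: "k \<in> {2..K}"
    have cS: "card (Sk k n) = n choose k"
      unfolding Sk_def using n_subsets[of "{..<n}" k] by simp
    have c: "real (n choose k) \<le> real n ^ k"
    proof (cases "k \<le> n")
      case True then show ?thesis using binomial_le_pow[OF True] by (metis of_nat_le_iff of_nat_power)
    next
      case False then show ?thesis by (simp add: binomial_eq_0)
    qed
    have "real (card (Sk k n)) * (p ^ k * (1 - p) ^ (n - k)) \<le> real n ^ k * p ^ k"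
    proof -
      have "(1 - p) ^ (n - k) \<le> 1" using p by (simp add: power_le_one)
      then have "p ^ k * (1 - p) ^ (n - k) \<le> p ^ k" using p by (simp add: mult_left_le)
      then show ?thesis unfolding cS using c p
        by (intro mult_mono) auto
    qed
    also have "\<dots> = (real n * p) ^ k" by (simp add: power_mult_distrib)
    also have "\<dots> \<le> (real n * p) ^ 2"
      using k np p by (intro power_decreasing) auto
    finally show "real (card (Sk k n)) * (p ^ k * (1 - p) ^ (n - k)) \<le> (real n * p)^2" .
  qed
  also have "\<dots> \<le> real K * (real n * p)^2"
    by (simp add: mult_right_mono)
  finally show ?thesis .
qed

theorem lemma2:
  fixes K :: nat and m :: "nat \<Rightarrow> nat" and p :: "nat \<Rightarrow> real"
  assumes "K \<ge> 2"
    and "\<And>n. m n > 0"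
    and "\<And>n. 0 \<le> p n \<and> p n \<le> 1"
    and "p \<in> o(\<lambda>n. 1 / real n)"
  shows "(\<lambda>n. dTV (union_rim K n (m n) (p n))
                  (union_binom K n (\<lambda>k. 1 - exp (- (real (m n) * p n ^ k * (1 - p n) ^ (n - k))))))
           \<longlonglongrightarrow> 0"
proof -
  have p01: "0 \<le> p n" "p n \<le> 1" for n using assms(3) by auto
  define Q where "Q n = measure_pmf.prob (Dp n (p n)) (RR n K)" for n
  have np: "(\<lambda>n. real n * p n) \<longlonglongrightarrow> 0"
  proof -
    have "(\<lambda>n. p n / (1 / real n)) \<longlonglongrightarrow> 0" using smalloD_tendsto[OF assms(4)] .
    then show ?thesis by (simp add: field_simps)
  qed
  have Q0: "Q \<longlonglongrightarrow> 0"
  proof (rule tendsto_sandwich[of "\<lambda>_. 0" _ _ "\<lambda>n. real K * (real n * p n)^2"])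
    show "\<forall>\<^sub>F n in sequentially. 0 \<le> Q n" by (simp add: Q_def)
    have "\<forall>\<^sub>F n in sequentially. real n * p n < 1"
      using order_tendstoD(2)[OF np, of 1] by simp
    then show "\<forall>\<^sub>F n in sequentially. Q n \<le> real K * (real n * p n)^2"
      by eventually_elim (use p01 in \<open>auto simp: Q_def intro!: Q_bound\<close>)
    have "(\<lambda>n. real K * (real n * p n)^2) \<longlonglongrightarrow> real K * 0^2"
      by (intro tendsto_intros np)
    then show "(\<lambda>n. real K * (real n * p n)^2) \<longlonglongrightarrow> 0" by simp
  qed simp
  have ev: "\<forall>\<^sub>F n in sequentially. Q n \<le> 1/256"
    by (rule eventually_mono[OF order_tendstoD(2)[OF Q0, of "1/256"]]) auto
  show ?thesis
  proof (rule tendsto_sandwich[of "\<lambda>_. 0" _ _ "\<lambda>n. 10 * sqrt (Q n)"])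
    show "\<forall>\<^sub>F n in sequentially. 0 \<le> dTV (union_rim K n (m n) (p n))
                  (union_binom K n (\<lambda>k. 1 - exp (- (real (m n) * p n ^ k * (1 - p n) ^ (n - k)))))"
      by (simp add: dTV_nonneg)
    show "\<forall>\<^sub>F n in sequentially. dTV (union_rim K n (m n) (p n))
                  (union_binom K n (\<lambda>k. 1 - exp (- (real (m n) * p n ^ k * (1 - p n) ^ (n - k))))) \<le> 10 * sqrt (Q n)"
      using ev
    proof eventually_elim
      case (elim n)
      show ?case
      proof (cases "Q n = 0")
        case True
        have eq: "union_rim K n (m n) (p n) = union_binom K n (\<lambda>k. 1 - exp (- (real (m n) * p n ^ k * (1 - p n) ^ (n - k))))"
          by (rule zero_case[OF p01[of n]]) (use True in \<open>simp only: Q_def\<close>)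
        show ?thesis unfolding eq dTV_same by (simp add: Q_def)
      next
        case False
        then have Qpos: "0 < Q n" by (simp add: Q_def less_le)
        define s where "s = sqrt (Q n)"
        have s0: "0 < s" using Qpos by (simp add: s_def)
        have s2: "s^2 = Q n" using Qpos by (simp add: s_def)
        have r: "sqrt (1/256) = (1/16::real)" by (rule real_sqrt_unique) (auto simp: power2_eq_square)
        have s16: "s \<le> 1/16" unfolding s_def r[symmetric] by (rule real_sqrt_le_mono[OF elim])
        have m1: "1 \<le> m n" using assms(2)[of n] by simp
        have e1: "union_rim K n (m n) (p n) = bind_pmf (binomial_pmf (m n) (Q n)) (Uj (cond_pmf (Dp n (p n)) (RR n K)))"
          unfolding Q_def by (rule decomp(1)[OF p01[of n] _ assms(2)[of n]]) (use Qpos in \<open>simp only: Q_def\<close>)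
        have e2: "union_binom K n (\<lambda>k. 1 - exp (- (real (m n) * p n ^ k * (1 - p n) ^ (n - k))))
            = bind_pmf (poisson_pmf (real (m n) * Q n)) (Uj (cond_pmf (Dp n (p n)) (RR n K)))"
          unfolding Q_def by (rule decomp(2)[OF p01[of n] _ assms(2)[of n]]) (use Qpos in \<open>simp only: Q_def\<close>)
        have "dTV (union_rim K n (m n) (p n))
                  (union_binom K n (\<lambda>k. 1 - exp (- (real (m n) * p n ^ k * (1 - p n) ^ (n - k)))))
            = dTV (bind_pmf (binomial_pmf (m n) (s^2)) (Uj (cond_pmf (Dp n (p n)) (RR n K))))
                  (bind_pmf (poisson_pmf (real (m n) * s^2)) (Uj (cond_pmf (Dp n (p n)) (RR n K))))"
          unfolding e1 e2 s2 ..
        also have "\<dots> \<le> 10 * s" by (rule bin_poi_main[OF m1 s0 s16])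
        finally show ?thesis by (simp only: s_def)
      qed
    qed
    have "(\<lambda>n. 10 * sqrt (Q n)) \<longlonglongrightarrow> 10 * sqrt 0"
      by (intro tendsto_intros Q0)
    then show "(\<lambda>n. 10 * sqrt (Q n)) \<longlonglongrightarrow> 0" by simp
  qed simp
qed


end
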